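(* Let $\rho_{AE}\in\mathcal S(AE)$ with $A=A_1\otimes A_2$, let $\{U_1,\dots,U_L\}$ be unitaries on $A$ with corresponding measurements $\mathcal M^j_{A\to K_1}(\cdot)=\mathcal I_{A_1\to K_1}(\mathcal T_{A\to A_1}(U_j\cdot U_j^\dagger))$, and suppose \[ \frac1L\sum_{j=1}^L\Bigl\|\mathcal M^j_{A\to K_1}(\rho_{AE})-\frac{\mathbb I_{K_1}}{|K_1|}\otimes\rho_E\Bigr\|_1\le\varepsilon(\rho) \] for some number $\varepsilon(\rho)$. Then $H_{\min}^{\sqrt{2\varepsilon(\rho)}}(K_1|EJ)_\rho\ge\log|K_1|$, where $\rho_{K_1EJ}=\frac1L\sum_{j=1}^L\mathcal M^j_{A\to K_1}(\rho_{AE})\otimes|j\rangle\langle j|_J$.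
   Context: All Hilbert spaces are finite-dimensional; $\log$ is base 2; $\mathcal S$ density operators, $\mathcal S_{\le}$ positive operators of trace $\le1$. Fix computational bases $\{|a_1\rangle\}$ of $A_1$, $\{|a_2\rangle\}$ of $A_2$; $\mathcal T_{A\to A_1}(X)=\sum_{a_1,a_2}\langle a_1a_2|X|a_1a_2\rangle|a_1\rangle\langle a_1|$ (applied as $\mathcal T\otimes\mathrm{id}_E$); $K_1$ is a copy of $A_1$ and $\mathcal I_{A_1\to K_1}$ the identity relabeling $|a_1\rangle\langle a_1'|\mapsto|a_1\rangle\langle a_1'|$; $J$ is a classical register with orthonormal basis $\{|j\rangle\}_{j=1}^L$. For $\rho_{AB}\in\mathcal S_{\le}(AB)$, $\sigma_B\in\mathcal S(B)$: $H_{\min}(A|B)_{\rho|\sigma}=\max\{\lambda:2^{-\lambda}\mathbb I_A\otimes\sigma_B\ge\rho_{AB}\}$, $H_{\min}(A|B)_\rho=\max_{\sigma_B}H_{\min}(A|B)_{\rho|\sigma}$; $\bar F(\rho,\sigma)=\|\sqrt\rho\sqrt\sigma\|_1+\sqrt{(1-\mathrm{tr}\rho)(1-\mathrm{tr}\sigma)}$, $P=\sqrt{1-\bar F^2}$, $H^\varepsilon_{\min}(A|B)_\rho=\max\{H_{\min}(A|B)_{\tilde\rho}:\tilde\rho_{AB}\in\mathcal S_{\le}(AB),P(\rho_{AB},\tilde\rho_{AB})\le\varepsilon\}$. *)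

theory Defs
  imports "HOL-Analysis.Analysis"
begin

text \<open>Finite-dimensional operators on a Hilbert space whose computational basis is
  indexed by a finite type 'n, represented by their matrix entries.\<close>
type_synonym 'n qop = "'n \<Rightarrow> 'n \<Rightarrow> complex"

definition mmult :: "'n::finite qop \<Rightarrow> 'n qop \<Rightarrow> 'n qop" where
  "mmult A B = (\<lambda>i k. \<Sum>j\<in>UNIV. A i j * B j k)"

definition adj :: "'n qop \<Rightarrow> 'n qop" where
  "adj A = (\<lambda>i j. cnj (A j i))"

definition idop :: "'n qop" where
  "idop = (\<lambda>i j. if i = j then 1 else 0)"

definition smul :: "complex \<Rightarrow> 'n qop \<Rightarrow> 'n qop" where
  "smul c A = (\<lambda>i j. c * A i j)"

definition msub :: "'n qop \<Rightarrow> 'n qop \<Rightarrow> 'n qop" where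
  "msub A B = (\<lambda>i j. A i j - B i j)"

definition tr :: "'n::finite qop \<Rightarrow> complex" where
  "tr A = (\<Sum>i\<in>UNIV. A i i)"

text \<open>Positive (semidefinite) operator: nonnegative quadratic form (over \<complex> this
  includes hermiticity).\<close>
definition psd :: "'n::finite qop \<Rightarrow> bool" where
  "psd A \<longleftrightarrow> (\<forall>v::'n \<Rightarrow> complex.
      Im (\<Sum>i\<in>UNIV. \<Sum>j\<in>UNIV. cnj (v i) * A i j * v j) = 0 \<and>
      Re (\<Sum>i\<in>UNIV. \<Sum>j\<in>UNIV. cnj (v i) * A i j * v j) \<ge> 0)"

definition loewner_le :: "'n::finite qop \<Rightarrow> 'n qop \<Rightarrow> bool" where
  "loewner_le A B \<longleftrightarrow> psd (msub B A)"

definition density_op :: "'n::finite qop \<Rightarrow> bool" where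
  "density_op \<rho> \<longleftrightarrow> psd \<rho> \<and> tr \<rho> = 1"

definition subnormalized :: "'n::finite qop \<Rightarrow> bool" where
  "subnormalized \<rho> \<longleftrightarrow> psd \<rho> \<and> Re (tr \<rho>) \<le> 1"

definition unitary_op :: "'n::finite qop \<Rightarrow> bool" where
  "unitary_op U \<longleftrightarrow> mmult (adj U) U = idop \<and> mmult U (adj U) = idop"

definition msqrt :: "'n::finite qop \<Rightarrow> 'n qop" where
  "msqrt A = (THE S. psd S \<and> mmult S S = A)"

definition trace_norm :: "'n::finite qop \<Rightarrow> real" where
  "trace_norm X = Re (tr (msqrt (mmult (adj X) X)))"

definition tensor :: "'a qop \<Rightarrow> 'b qop \<Rightarrow> ('a \<times> 'b) qop" where
  "tensor A B = (\<lambda>(i, k) (j, l). A i j * B k l)"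

definition ptrace_fst :: "('a::finite \<times> 'b) qop \<Rightarrow> 'b qop" where
  "ptrace_fst X = (\<lambda>b b'. \<Sum>a\<in>UNIV. X (a, b) (a, b'))"

definition gen_fidelity :: "'n::finite qop \<Rightarrow> 'n qop \<Rightarrow> real" where
  "gen_fidelity \<rho> \<sigma> = trace_norm (mmult (msqrt \<rho>) (msqrt \<sigma>))
     + sqrt ((1 - Re (tr \<rho>)) * (1 - Re (tr \<sigma>)))"

definition purified_dist :: "'n::finite qop \<Rightarrow> 'n qop \<Rightarrow> real" where
  "purified_dist \<rho> \<sigma> = sqrt (1 - (gen_fidelity \<rho> \<sigma>)\<^sup>2)"

text \<open>Conditional min-entropies (base-2 logarithm), valued in the extended reals
  (Sup of the empty set is -\<infinity>; the maxima in the paper are attained).\<close>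
definition hmin_rel :: "('a::finite \<times> 'b::finite) qop \<Rightarrow> 'b qop \<Rightarrow> ereal" where
  "hmin_rel \<rho> \<sigma> = Sup {ereal l | l. loewner_le \<rho> (smul (complex_of_real (2 powr (- l))) (tensor idop \<sigma>))}"

definition hmin :: "('a::finite \<times> 'b::finite) qop \<Rightarrow> ereal" where
  "hmin \<rho> = Sup {hmin_rel \<rho> \<sigma> | \<sigma>. density_op \<sigma>}"

definition hmin_smooth :: "real \<Rightarrow> ('a::finite \<times> 'b::finite) qop \<Rightarrow> ereal" where
  "hmin_smooth \<epsilon> \<rho> = Sup {hmin \<rho>' | \<rho>'. subnormalized \<rho>' \<and> purified_dist \<rho> \<rho>' \<le> \<epsilon>}"

text \<open>The pinching T_{A\<rightarrow>A1} (A = A1 \<otimes> A2) applied as T \<otimes> id_E, followed by the identity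
  relabelling I_{A1\<rightarrow>K1}; K1 is represented by the same index type as A1.\<close>
definition pinch_relabel :: "((('a1::finite \<times> 'a2::finite) \<times> 'e) qop) \<Rightarrow> ('a1 \<times> 'e) qop" where
  "pinch_relabel X = (\<lambda>(k, e) (k', e'). if k = k' then (\<Sum>a2\<in>UNIV. X ((k, a2), e) ((k, a2), e')) else 0)"

text \<open>The measurement M^j_{A\<rightarrow>K1}(\<cdot>) = I_{A1\<rightarrow>K1}(T_{A\<rightarrow>A1}(U_j \<cdot> U_j^dagger)), applied as M \<otimes> id_E.\<close>
definition meas :: "('a1::finite \<times> 'a2::finite) qop \<Rightarrow> (('a1 \<times> 'a2) \<times> 'e::finite) qop \<Rightarrow> ('a1 \<times> 'e) qop" where
  "meas U X = pinch_relabel (mmult (tensor U idop) (mmult X (adj (tensor U idop))))"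

text \<open>rho_{K1 E J} = 1/L \<Sum>_j M^j(rho_AE) \<otimes> |j><j|_J, ordered as K1 \<otimes> (E \<otimes> J); L = CARD('j).\<close>
definition cq_state :: "('j::finite \<Rightarrow> ('k \<times> 'e) qop) \<Rightarrow> ('k \<times> ('e \<times> 'j)) qop" where
  "cq_state M = (\<lambda>(k, (e, j)) (k', (e', j')).
      if j = j' then M j (k, e) (k', e') / of_nat CARD('j) else 0)"

end

theory Submission
  imports Defs
begin


definition mv :: "'n::finite qop \<Rightarrow> ('n \<Rightarrow> complex) \<Rightarrow> ('n \<Rightarrow> complex)" where
  "mv A v = (\<lambda>i. \<Sum>j\<in>UNIV. A i j * v j)"

definition ip :: "('n::finite \<Rightarrow> complex) \<Rightarrow> ('n \<Rightarrow> complex) \<Rightarrow> complex" where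
  "ip u v = (\<Sum>i\<in>UNIV. cnj (u i) * v i)"

definition qf :: "'n::finite qop \<Rightarrow> ('n \<Rightarrow> complex) \<Rightarrow> complex" where
  "qf A v = (\<Sum>i\<in>UNIV. \<Sum>j\<in>UNIV. cnj (v i) * A i j * v j)"

lemma qf_ip: "qf A v = ip v (mv A v)"
  unfolding qf_def ip_def mv_def by (simp add: sum_distrib_left mult.assoc)

lemma mmult_assoc: "mmult (mmult A B) C = mmult A (mmult B C)"
  unfolding mmult_def
  by (auto simp: sum_distrib_left sum_distrib_right mult.assoc intro!: ext sum.swap[THEN trans])

lemma mmult_id_left[simp]: "mmult idop A = A"
proof -
  have "(\<Sum>j\<in>UNIV. (if i = j then 1 else 0) * A j k) = (\<Sum>j\<in>UNIV. if i = j then A j k else 0)" for i k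
    by (rule sum.cong) auto
  hence "(\<Sum>j\<in>UNIV. (if i = j then 1 else 0) * A j k) = A i k" for i k by simp
  thus ?thesis unfolding mmult_def idop_def by (auto intro!: ext)
qed
lemma mmult_id_right[simp]: "mmult A idop = A"
proof -
  have "(\<Sum>j\<in>UNIV. A i j * (if j = k then 1 else 0)) = A i k" for i k
    by (simp add: if_distrib cong: if_cong)
  thus ?thesis unfolding mmult_def idop_def by (auto intro!: ext)
qed
lemma adj_adj[simp]: "adj (adj A) = A" unfolding adj_def by auto
lemma adj_mmult: "adj (mmult A B) = mmult (adj B) (adj A)"
  unfolding adj_def mmult_def by (auto intro!: ext simp: mult.commute)
lemma adj_id[simp]: "adj idop = idop" unfolding adj_def idop_def by (auto intro!: ext)

lemma tr_mmult_comm: "tr (mmult A B) = tr (mmult B A)"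
  unfolding tr_def mmult_def by (subst sum.swap) (simp add: mult.commute)

lemma mv_mmult: "mv (mmult A B) v = mv A (mv B v)"
  unfolding mv_def mmult_def
  by (auto intro!: ext simp: sum_distrib_left sum_distrib_right mult.assoc intro: sum.swap[THEN trans])

lemma ip_adj: "ip u (mv A v) = ip (mv (adj A) u) v"
  unfolding ip_def mv_def adj_def
  by (auto simp: sum_distrib_left sum_distrib_right mult.assoc mult.left_commute intro: sum.swap[THEN trans])

lemma mmult_left_right_inverse:
  fixes A B :: "'n::finite qop"
  assumes "mmult A B = idop" shows "mmult B A = idop"
proof -
  let ?M = "\<lambda>X::'n qop. (\<chi> i j. X i j) :: complex^'n^'n"
  have h: "?M (mmult X Y) = ?M X ** ?M Y" for X Y
    unfolding mmult_def matrix_matrix_mult_def by simp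
  have i: "?M idop = mat 1" unfolding idop_def mat_def by (simp add: vec_eq_iff)
  have "?M A ** ?M B = mat 1" using assms h i by metis
  hence "?M B ** ?M A = mat 1" using matrix_left_right_inverse by blast
  hence "?M (mmult B A) = ?M idop" using h i by metis
  thus ?thesis by (auto simp: vec_eq_iff fun_eq_iff)
qed



lemma ip_add_right: "ip u (\<lambda>i. v i + w i) = ip u v + ip u w"
  unfolding ip_def by (simp add: distrib_left sum.distrib)
lemma ip_diff_right: "ip u (\<lambda>i. v i - w i) = ip u v - ip u w"
  unfolding ip_def by (simp add: right_diff_distrib sum_subtractf)
lemma ip_scale_right: "ip u (\<lambda>i. c * v i) = c * ip u v"
  unfolding ip_def by (simp add: sum_distrib_left mult.left_commute)
lemma ip_add_left: "ip (\<lambda>i. v i + w i) u = ip v u + ip w u"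
  unfolding ip_def by (simp add: distrib_right sum.distrib)
lemma ip_diff_left: "ip (\<lambda>i. v i - w i) u = ip v u - ip w u"
  unfolding ip_def by (simp add: left_diff_distrib sum_subtractf)
lemma ip_scale_left: "ip (\<lambda>i. c * v i) u = cnj c * ip v u"
  unfolding ip_def by (simp add: sum_distrib_left mult.assoc)
lemma ip_sym: "ip v u = cnj (ip u v)"
  unfolding ip_def by (simp add: mult.commute)
lemma ip_self_real: "ip u u = of_real (\<Sum>i\<in>UNIV. (cmod (u i))^2)"
  unfolding ip_def of_real_sum by (rule sum.cong) (auto simp: complex_norm_square[symmetric] mult.commute simp del: of_real_power)
lemma ip_self_ge0: "Re (ip u u) \<ge> 0"
  unfolding ip_self_real by (simp add: sum_nonneg)
lemma ip_self_Im: "Im (ip u u) = 0"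
  unfolding ip_self_real by simp
lemma ip_self_eq0: "ip u u = 0 \<longleftrightarrow> u = (\<lambda>i. 0)"
proof
  assume "ip u u = 0"
  hence "(\<Sum>i\<in>UNIV. (cmod (u i))^2) = 0" unfolding ip_self_real by (simp only: of_real_eq_0_iff)
  hence "\<forall>i\<in>UNIV. (cmod (u i))^2 = 0" by (subst (asm) sum_nonneg_eq_0_iff) auto
  thus "u = (\<lambda>i. 0)" by auto
qed (simp add: ip_def)
lemma ip_zero_right[simp]: "ip u (\<lambda>i. 0) = 0" by (simp add: ip_def)
lemma ip_zero_left[simp]: "ip (\<lambda>i. 0) u = 0" by (simp add: ip_def)

lemma mv_add: "mv A (\<lambda>i. v i + w i) = (\<lambda>i. mv A v i + mv A w i)"
  unfolding mv_def by (simp add: distrib_left sum.distrib)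
lemma mv_diff: "mv A (\<lambda>i. v i - w i) = (\<lambda>i. mv A v i - mv A w i)"
  unfolding mv_def by (simp add: right_diff_distrib sum_subtractf)
lemma mv_scale: "mv A (\<lambda>i. c * v i) = (\<lambda>i. c * mv A v i)"
  unfolding mv_def by (simp add: sum_distrib_left mult.left_commute)

definition herm :: "'n::finite qop \<Rightarrow> bool" where "herm A \<longleftrightarrow> adj A = A"

lemma herm_ip: "herm A \<Longrightarrow> ip u (mv A v) = ip (mv A u) v"
  unfolding herm_def by (metis ip_adj)

lemma herm_qf_real: "herm A \<Longrightarrow> Im (ip u (mv A u)) = 0"
proof -
  assume "herm A"
  hence "ip u (mv A u) = cnj (ip u (mv A u))" using herm_ip ip_sym by metis
  hence "Im (ip u (mv A u)) = - Im (ip u (mv A u))" by (metis complex_cnj_cancel_iff cnj.sel(2))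
  thus ?thesis by simp
qed

definition ev :: "'n \<Rightarrow> 'n \<Rightarrow> complex" where "ev i = (\<lambda>k. if k = i then 1 else 0)"

lemma ip_ev_left: "ip (ev i) u = u i"
proof -
  have "ip (ev i) u = (\<Sum>k\<in>UNIV. if k = i then u k else 0)" unfolding ip_def ev_def by (rule sum.cong) auto
  thus ?thesis by simp
qed
lemma mv_ev: "mv A (ev j) = (\<lambda>i. A i j)"
proof -
  have "mv A (ev j) i = (\<Sum>k\<in>UNIV. if k = j then A i k else 0)" for i unfolding mv_def ev_def by (rule sum.cong) auto
  thus ?thesis by auto
qed
lemma qf_add: "ip (\<lambda>k. x k + y k) (mv A (\<lambda>k. x k + y k)) = ip x (mv A x) + ip y (mv A y) + ip x (mv A y) + ip y (mv A x)"
  by (simp add: mv_add ip_add_left ip_add_right)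


lemma psd_herm: assumes "psd A" shows "herm A"
proof -
  have P: "Im (ip v (mv A v)) = 0" for v
  proof -
    have "Im (qf A v) = 0" using assms unfolding psd_def qf_def by blast
    thus ?thesis by (simp add: qf_ip)
  qed
  have d: "Im (A i i) = 0" for i using P[of "ev i"] by (simp add: mv_ev ip_ev_left)
  have "A j i = cnj (A i j)" for i j
  proof -
    have 1: "Im (A i j + A j i) = 0"
    proof -
      have "ip (\<lambda>k. ev i k + ev j k) (mv A (\<lambda>k. ev i k + ev j k)) = A i i + A j j + A i j + A j i"
        unfolding qf_add by (simp only: mv_ev ip_ev_left)
      thus ?thesis using P[of "\<lambda>k. ev i k + ev j k"] d[of i] d[of j] by simp
    qed
    have 2: "Im (\<i> * A i j - \<i> * A j i) = 0"
    proof -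
      have "ip (\<lambda>k. ev i k + \<i> * ev j k) (mv A (\<lambda>k. ev i k + \<i> * ev j k)) = A i i + cnj \<i> * (\<i> * A j j) + \<i> * A i j + cnj \<i> * A j i"
        unfolding qf_add by (simp only: mv_ev ip_ev_left mv_scale ip_scale_left ip_scale_right)
      thus ?thesis using P[of "\<lambda>k. ev i k + \<i> * ev j k"] d[of i] d[of j] by simp
    qed
    from 1 2 show ?thesis by (simp add: complex_eq_iff)
  qed
  hence "cnj (A j i) = A i j" for i j by (metis complex_cnj_cnj)
  thus ?thesis unfolding herm_def adj_def by (intro ext) metis
qed



lemma ip_sum_right: "ip u (\<lambda>i. \<Sum>l\<in>K. c l * f l i) = (\<Sum>l\<in>K. c l * ip u (f l))"
  unfolding ip_def by (simp add: sum_distrib_left mult.left_commute sum.swap[of _ UNIV])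

lemma exists_orth:
  fixes e :: "'n::finite \<Rightarrow> 'n \<Rightarrow> complex"
  assumes K: "K \<noteq> UNIV" and on: "\<forall>k\<in>K. \<forall>l\<in>K. ip (e k) (e l) = (if k = l then 1 else 0)"
  shows "\<exists>w. w \<noteq> (\<lambda>i. 0) \<and> (\<forall>k\<in>K. ip (e k) w = 0)"
proof -
  define S where "S = (\<lambda>k. vec_lambda (e k) :: complex^'n) ` K"
  have "card K < CARD('n)" using K by (metis finite psubset_card_mono subset_UNIV psubsetI)
  hence cS: "card S < CARD('n)" unfolding S_def by (meson card_image_le finite le_less_trans)
  have "vec.span S \<noteq> UNIV"
  proof
    assume "vec.span S = UNIV"
    hence "vec.dim (UNIV :: (complex^'n) set) \<le> card S"
      by (intro vec.dim_le_card) (auto simp: S_def)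
    thus False using cS vec_dim_card by (metis not_le)
  qed
  then obtain x where x: "x \<notin> vec.span S" by auto
  define c where "c k = ip (e k) (vec_nth x)" for k
  define w where "w = (\<lambda>i. x $ i - (\<Sum>l\<in>K. c l * e l i))"
  have "w \<noteq> (\<lambda>i. 0)"
  proof
    assume "w = (\<lambda>i. 0)"
    hence "x = (\<Sum>l\<in>K. c l *s vec_lambda (e l))" unfolding w_def
      by (auto simp: vec_eq_iff fun_eq_iff sum_component)
    moreover have "(\<Sum>l\<in>K. c l *s vec_lambda (e l)) \<in> vec.span S"
      unfolding S_def by (intro vec.span_sum vec.span_scale vec.span_base) auto
    ultimately show False using x by simp
  qed
  moreover have "\<forall>k\<in>K. ip (e k) w = 0"
  proof
    fix k assume k: "k \<in> K"
    have "ip (e k) w = c k - (\<Sum>l\<in>K. c l * ip (e k) (e l))"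
      unfolding w_def ip_diff_right ip_sum_right c_def by simp
    also have "(\<Sum>l\<in>K. c l * ip (e k) (e l)) = (\<Sum>l\<in>K. if l = k then c l else 0)"
      using on k by (intro sum.cong) auto
    also have "\<dots> = c k" using k by simp
    finally show "ip (e k) w = 0" by simp
  qed
  ultimately show ?thesis by blast
qed



lemma norm_vec_ip: "norm (x :: complex^'n::finite) = sqrt (Re (ip (vec_nth x) (vec_nth x)))"
  unfolding norm_vec_def L2_set_def ip_self_real by simp

lemma cont_ip: "continuous_on A (\<lambda>x::complex^'n::finite. ip u (vec_nth x))"
  unfolding ip_def by (intro continuous_intros continuous_on_component continuous_on_id)

lemma cont_qf: "continuous_on A (\<lambda>x::complex^'n::finite. Re (ip (vec_nth x) (mv H (vec_nth x))))"
  unfolding ip_def mv_def by (intro continuous_intros continuous_on_component continuous_on_id)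

lemma ip_scale_both: "ip (\<lambda>i. of_real c * u i) (mv H (\<lambda>i. of_real c * u i)) = of_real (c^2) * ip u (mv H u)"
  by (simp add: mv_scale ip_scale_left ip_scale_right power2_eq_square)
lemma ip_scale_both': "ip (\<lambda>i. of_real c * u i) (\<lambda>i. of_real c * u i) = of_real (c^2) * ip u u"
  by (simp add: ip_scale_left ip_scale_right power2_eq_square)

lemma exists_max:
  fixes e :: "'n::finite \<Rightarrow> 'n \<Rightarrow> complex" and H :: "'n qop"
  assumes w: "w \<noteq> (\<lambda>i. 0)" "\<forall>k\<in>K. ip (e k) w = 0"
  shows "\<exists>v. (\<forall>k\<in>K. ip (e k) v = 0) \<and> ip v v = 1 \<and>
     (\<forall>u. (\<forall>k\<in>K. ip (e k) u = 0) \<longrightarrow> Re (ip u (mv H u)) \<le> Re (ip v (mv H v)) * Re (ip u u))"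
proof -
  define C where "C = {x::complex^'n. norm x = 1 \<and> (\<forall>k\<in>K. ip (e k) (vec_nth x) = 0)}"
  have C_eq: "C = sphere 0 1 \<inter> (\<Inter>k\<in>K. {x. ip (e k) (vec_nth x) = 0})"
    unfolding C_def by auto
  have "compact C" unfolding C_eq
    by (intro compact_Int_closed compact_sphere closed_INT ballI closed_Collect_eq cont_ip continuous_on_const)
  have norm1: "u \<noteq> (\<lambda>i. 0) \<Longrightarrow> (\<forall>k\<in>K. ip (e k) u = 0) \<Longrightarrow>
      vec_lambda (\<lambda>i. of_real (1 / sqrt (Re (ip u u))) * u i) \<in> C \<and> Re (ip u u) > 0" for u
  proof -
    assume u: "u \<noteq> (\<lambda>i. 0)" "\<forall>k\<in>K. ip (e k) u = 0"
    have pos: "Re (ip u u) > 0" using ip_self_ge0[of u] ip_self_eq0[of u] ip_self_Im[of u] u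
      by (metis complex_eq_iff less_eq_real_def zero_complex.sel(1) zero_complex.sel(2))
    let ?c = "1 / sqrt (Re (ip u u))"
    have "Re (ip (\<lambda>i. of_real ?c * u i) (\<lambda>i. of_real ?c * u i)) = 1"
      unfolding ip_scale_both' using pos by (simp add: power_divide)
    moreover have "\<forall>k\<in>K. ip (e k) (\<lambda>i. of_real ?c * u i) = 0" using u by (simp only: ip_scale_right) simp
    ultimately show ?thesis using pos unfolding C_def norm_vec_ip by (simp add: vec_lambda_inverse)
  qed
  have "C \<noteq> {}" using norm1[OF w] by auto
  from continuous_attains_sup[OF \<open>compact C\<close> this cont_qf[of C H]]
  obtain x where x: "x \<in> C" and xmax: "\<forall>y\<in>C. Re (ip (vec_nth y) (mv H (vec_nth y))) \<le> Re (ip (vec_nth x) (mv H (vec_nth x)))"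
    by blast
  define v where "v = vec_nth x"
  have v1: "ip v v = 1"
  proof -
    have "Re (ip v v) = 1" using x unfolding C_def norm_vec_ip v_def by simp
    thus ?thesis using ip_self_Im[of v] by (simp add: complex_eq_iff)
  qed
  have vK: "\<forall>k\<in>K. ip (e k) v = 0" using x unfolding C_def v_def by simp
  have "Re (ip u (mv H u)) \<le> Re (ip v (mv H v)) * Re (ip u u)" if uK: "\<forall>k\<in>K. ip (e k) u = 0" for u
  proof (cases "u = (\<lambda>i. 0)")
    case True thus ?thesis by (simp add: mv_def)
  next
    case False
    from norm1[OF False uK] have inC: "vec_lambda (\<lambda>i. of_real (1 / sqrt (Re (ip u u))) * u i) \<in> C"
      and pos: "Re (ip u u) > 0" by auto
    from xmax inC have "Re (ip (\<lambda>i. of_real (1 / sqrt (Re (ip u u))) * u i) (mv H (\<lambda>i. of_real (1 / sqrt (Re (ip u u))) * u i))) \<le> Re (ip v (mv H v))"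
      unfolding v_def by (metis (no_types, lifting) vec_lambda_inverse UNIV_I)
    hence "Re (of_real ((1 / sqrt (Re (ip u u)))^2) * ip u (mv H u)) \<le> Re (ip v (mv H v))"
      by (simp only: ip_scale_both)
    hence "Re (ip u (mv H u)) / Re (ip u u) \<le> Re (ip v (mv H v))" using pos
      by (simp add: power_divide)
    thus ?thesis using pos by (simp add: divide_le_eq)
  qed
  thus ?thesis using v1 vK by blast
qed



lemma quad_zero: fixes a b :: real assumes "\<forall>t. 2*t*a + t^2*b \<le> 0" shows "a = 0"
proof (rule ccontr)
  assume a: "a \<noteq> 0"
  define c where "c = \<bar>b\<bar> + 1"
  have c: "c > 0" unfolding c_def by simp
  have "2*(a/c)*a + (a/c)^2*b \<le> 0" using assms by blast
  hence "(2*c + b) * a^2 / c^2 \<le> 0" using c by (simp add: field_simps power2_eq_square)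
  moreover have "(2*c + b) * a^2 / c^2 > 0" using a c unfolding c_def by (intro divide_pos_pos mult_pos_pos) auto
  ultimately show False by simp
qed

lemma max_eigen:
  fixes e :: "'n::finite \<Rightarrow> 'n \<Rightarrow> complex" and H :: "'n qop"
  assumes H: "herm H"
    and eig: "\<forall>k\<in>K. mv H (e k) = (\<lambda>i. of_real (d k) * e k i)"
    and vK: "\<forall>k\<in>K. ip (e k) v = 0" and v1: "ip v v = 1"
    and mx: "\<forall>u. (\<forall>k\<in>K. ip (e k) u = 0) \<longrightarrow> Re (ip u (mv H u)) \<le> Re (ip v (mv H v)) * Re (ip u u)"
  shows "mv H v = (\<lambda>i. of_real (Re (ip v (mv H v))) * v i)"
proof -
  define \<mu> where "\<mu> = Re (ip v (mv H v))"
  have claimRe: "Re (ip w (mv H v)) = 0" if wK: "\<forall>k\<in>K. ip (e k) w = 0" and vw: "ip v w = 0" for w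
  proof -
    define a where "a = Re (ip w (mv H v))"
    define b where "b = Re (ip w (mv H w)) - \<mu> * Re (ip w w)"
    have wv: "ip w v = 0" using vw ip_sym[of w v] by simp
    have "2*t*a + t^2*b \<le> 0" for t
    proof -
      let ?u = "\<lambda>i. v i + of_real t * w i"
      have uK: "\<forall>k\<in>K. ip (e k) ?u = 0" using vK wK by (simp add: ip_add_right ip_scale_right)
      have q: "ip ?u (mv H ?u) = ip v (mv H v) + of_real (t^2) * ip w (mv H w) + of_real t * ip v (mv H w) + of_real t * ip w (mv H v)"
        unfolding qf_add by (simp add: mv_scale ip_scale_left ip_scale_right power2_eq_square)
      have s: "ip v (mv H w) = cnj (ip w (mv H v))" using herm_ip[OF H] ip_sym by metis
      have Q: "Re (ip ?u (mv H ?u)) = \<mu> + t^2 * Re (ip w (mv H w)) + 2 * t * a"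
        unfolding q s a_def \<mu>_def by simp
      have n: "Re (ip ?u ?u) = 1 + t^2 * Re (ip w w)"
        using v1 vw wv by (simp add: ip_add_left ip_add_right ip_scale_left ip_scale_right power2_eq_square)
      from mx uK have "Re (ip ?u (mv H ?u)) \<le> \<mu> * Re (ip ?u ?u)" unfolding \<mu>_def by blast
      thus ?thesis unfolding Q n b_def by (simp add: algebra_simps)
    qed
    thus ?thesis using quad_zero a_def by blast
  qed
  have claim: "ip w (mv H v) = 0" if wK: "\<forall>k\<in>K. ip (e k) w = 0" and vw: "ip v w = 0" for w
  proof -
    have 1: "Re (ip w (mv H v)) = 0" using claimRe wK vw by blast
    have "Re (ip (\<lambda>i. \<i> * w i) (mv H v)) = 0" using wK vw
      by (intro claimRe) (simp_all add: ip_scale_right)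
    hence "Im (ip w (mv H v)) = 0" by (simp add: ip_scale_left)
    with 1 show ?thesis by (simp add: complex_eq_iff)
  qed
  define r where "r = (\<lambda>i. mv H v i - of_real \<mu> * v i)"
  have rK: "\<forall>k\<in>K. ip (e k) r = 0"
  proof
    fix k assume k: "k \<in> K"
    have "ip (e k) (mv H v) = ip (mv H (e k)) v" using herm_ip[OF H] by metis
    also have "\<dots> = of_real (d k) * ip (e k) v" using eig k by (simp add: ip_scale_left)
    finally show "ip (e k) r = 0" unfolding r_def ip_diff_right ip_scale_right using vK k by simp
  qed
  have "ip v (mv H v) = of_real \<mu>" unfolding \<mu>_def using herm_qf_real[OF H, of v] by (simp add: complex_eq_iff)
  hence vr: "ip v r = 0" unfolding r_def ip_diff_right ip_scale_right using v1 by simp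
  have "ip r (mv H v) = 0" by (rule claim[OF rK vr])
  moreover have "ip r v = 0" using vr ip_sym[of r v] by simp
  moreover have eq: "(\<lambda>i. mv H v i - of_real \<mu> * v i) = r" by (simp add: r_def)
  moreover have "ip r (\<lambda>i. mv H v i - of_real \<mu> * v i) = ip r (mv H v) - of_real \<mu> * ip r v"
    by (simp only: ip_diff_right ip_scale_right)
  ultimately have "ip r r = 0" by simp
  hence "r = (\<lambda>i. 0)" by (simp add: ip_self_eq0)
  thus ?thesis unfolding r_def \<mu>_def by (auto simp: fun_eq_iff)
qed



lemma eig_family:
  fixes H :: "'n::finite qop"
  assumes H: "herm H"
  shows "\<exists>(e::'n \<Rightarrow> 'n \<Rightarrow> complex) d. (\<forall>k\<in>K. \<forall>l\<in>K. ip (e k) (e l) = (if k = l then 1 else 0)) \<and>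
           (\<forall>k\<in>K. mv H (e k) = (\<lambda>i. of_real (d k) * e k i))"
proof (induction K rule: finite_induct[OF finite])
  case 1 show ?case by simp
next
  case (2 x F)
  then obtain e d where on: "\<forall>k\<in>F. \<forall>l\<in>F. ip (e k) (e l) = (if k = l then 1 else 0)"
    and eig: "\<forall>k\<in>F. mv H (e k) = (\<lambda>i. of_real (d k) * e k i)" by blast
  have "F \<noteq> UNIV" using 2 by auto
  from exists_orth[OF this on] obtain w where "w \<noteq> (\<lambda>i. 0)" "\<forall>k\<in>F. ip (e k) w = 0" by blast
  from exists_max[OF this, of H] obtain v where vK: "\<forall>k\<in>F. ip (e k) v = 0" and v1: "ip v v = 1"
    and mx: "\<forall>u. (\<forall>k\<in>F. ip (e k) u = 0) \<longrightarrow> Re (ip u (mv H u)) \<le> Re (ip v (mv H v)) * Re (ip u u)"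
    by blast
  have ev: "mv H v = (\<lambda>i. of_real (Re (ip v (mv H v))) * v i)" by (rule max_eigen[OF H eig vK v1 mx])
  define e' where "e' = e(x := v)"
  define d' where "d' = d(x := Re (ip v (mv H v)))"
  have "\<forall>k\<in>insert x F. \<forall>l\<in>insert x F. ip (e' k) (e' l) = (if k = l then 1 else 0)"
  proof -
    have "\<forall>k\<in>F. ip v (e k) = 0" using vK by (metis ip_sym complex_cnj_zero)
    thus ?thesis using on vK v1 2(2) unfolding e'_def by auto
  qed
  moreover have "\<forall>k\<in>insert x F. mv H (e' k) = (\<lambda>i. of_real (d' k) * e' k i)"
    using eig ev 2(2) unfolding e'_def d'_def by auto
  ultimately show ?case by blast
qed

definition dg :: "('n \<Rightarrow> complex) \<Rightarrow> 'n qop" where "dg f = (\<lambda>i j. if i = j then f i else 0)"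

lemma mmult_dg_right: "mmult A (dg f) = (\<lambda>i k. A i k * f k)"
proof -
  have "(\<Sum>j\<in>UNIV. A i j * (if j = k then f j else 0)) = (\<Sum>j\<in>UNIV. if j = k then A i k * f k else 0)" for i k
    by (rule sum.cong) auto
  thus ?thesis unfolding mmult_def dg_def by (auto intro!: ext)
qed

lemma mmult_dg_left: "mmult (dg f) A = (\<lambda>i k. f i * A i k)"
proof -
  have "(\<Sum>j\<in>UNIV. (if i = j then f i else 0) * A j k) = (\<Sum>j\<in>UNIV. if j = i then f i * A i k else 0)" for i k
    by (rule sum.cong) auto
  thus ?thesis unfolding mmult_def dg_def by (auto intro!: ext)
qed

theorem spectral:
  fixes H :: "'n::finite qop"
  assumes H: "herm H"
  shows "\<exists>E d. unitary_op E \<and> H = mmult E (mmult (dg (\<lambda>i. of_real (d i))) (adj E))"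
proof -
  obtain e :: "'n \<Rightarrow> 'n \<Rightarrow> complex" and d where on: "\<forall>k l. ip (e k) (e l) = (if k = l then 1 else 0)"
    and eig: "\<forall>k. mv H (e k) = (\<lambda>i. of_real (d k) * e k i)"
    using eig_family[OF H, of UNIV] by (metis UNIV_I)
  define E where "E = (\<lambda>i k. e k i)"
  have 1: "mmult (adj E) E = idop"
    using on unfolding mmult_def adj_def E_def idop_def ip_def by (auto intro!: ext)
  hence 2: "mmult E (adj E) = idop" by (rule mmult_left_right_inverse)
  have HE: "mmult H E = mmult E (dg (\<lambda>i. of_real (d i)))"
    unfolding mmult_dg_right using eig unfolding mmult_def E_def mv_def
    by (auto intro!: ext simp: fun_eq_iff mult.commute)
  have "H = mmult (mmult H E) (adj E)" by (simp add: mmult_assoc 2)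
  also have "\<dots> = mmult E (mmult (dg (\<lambda>i. of_real (d i))) (adj E))" by (simp add: HE mmult_assoc)
  finally show ?thesis using 1 2 unfolding unitary_op_def by blast
qed



lemma ip_dg: "ip u (mv (dg (\<lambda>i. of_real (f i))) u) = of_real (\<Sum>i\<in>UNIV. f i * (cmod (u i))^2)"
proof -
  have "mv (dg (\<lambda>i. of_real (f i))) u = (\<lambda>i. of_real (f i) * u i)"
  proof
    fix i
    have "(\<Sum>j\<in>UNIV. (if i = j then complex_of_real (f i) else 0) * u j) = (\<Sum>j\<in>UNIV. if j = i then complex_of_real (f i) * u i else 0)"
      by (rule sum.cong) auto
    thus "mv (dg (\<lambda>i. of_real (f i))) u i = of_real (f i) * u i" unfolding mv_def dg_def by simp
  qed
  moreover have "cnj (u i) * (of_real (f i) * u i) = of_real (f i * (cmod (u i))^2)" for i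
  proof -
    have "cnj (u i) * (of_real (f i) * u i) = of_real (f i) * (u i * cnj (u i))" by (simp add: ac_simps)
    also have "\<dots> = of_real (f i) * of_real ((cmod (u i))^2)" by (simp only: complex_norm_square)
    finally show ?thesis by simp
  qed
  ultimately show ?thesis unfolding ip_def of_real_sum by (simp only:)
qed

lemma psd_conj_dg:
  assumes "\<forall>i. f i \<ge> 0"
  shows "psd (mmult E (mmult (dg (\<lambda>i. of_real (f i))) (adj E)))"
  unfolding psd_def
proof
  fix v
  have "(\<Sum>i\<in>UNIV. \<Sum>j\<in>UNIV. cnj (v i) * mmult E (mmult (dg (\<lambda>i. of_real (f i))) (adj E)) i j * v j)
     = ip (mv (adj E) v) (mv (dg (\<lambda>i. of_real (f i))) (mv (adj E) v))"
    unfolding qf_def[symmetric] qf_ip mv_mmult ip_adj by simp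
  also have "\<dots> = of_real (\<Sum>i\<in>UNIV. f i * (cmod (mv (adj E) v i))^2)" by (rule ip_dg)
  finally show "Im (\<Sum>i\<in>UNIV. \<Sum>j\<in>UNIV. cnj (v i) * mmult E (mmult (dg (\<lambda>i. of_real (f i))) (adj E)) i j * v j) = 0 \<and>
    0 \<le> Re (\<Sum>i\<in>UNIV. \<Sum>j\<in>UNIV. cnj (v i) * mmult E (mmult (dg (\<lambda>i. of_real (f i))) (adj E)) i j * v j)"
    using assms by (simp add: sum_nonneg)
qed

lemma psd_decomp:
  fixes A :: "'n::finite qop"
  assumes "psd A"
  shows "\<exists>E f. unitary_op E \<and> (\<forall>i. f i \<ge> 0) \<and> A = mmult E (mmult (dg (\<lambda>i. of_real (f i))) (adj E))"
proof -
  obtain E f where U: "unitary_op E" and A: "A = mmult E (mmult (dg (\<lambda>i. of_real (f i))) (adj E))"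
    using spectral[OF psd_herm[OF assms]] by blast
  have "f k \<ge> 0" for k
  proof -
    have "mmult (adj E) (mmult A E) = dg (\<lambda>i. of_real (f i))"
      using U unfolding A unitary_op_def by (simp add: mmult_assoc flip: mmult_assoc[of "adj E" E])
    hence "of_real (f k) = mmult (adj E) (mmult A E) k k" unfolding dg_def by (metis)
    also have "\<dots> = qf A (\<lambda>i. E i k)" unfolding mmult_def adj_def qf_def
      by (simp add: sum_distrib_left sum_distrib_right mult.assoc mult.commute mult.left_commute)
    finally have "of_real (f k) = qf A (\<lambda>i. E i k)" .
    moreover have "Re (qf A (\<lambda>i. E i k)) \<ge> 0" using assms[unfolded psd_def, rule_format, of "\<lambda>i. E i k"] unfolding qf_def by simp
    ultimately show ?thesis by (metis Re_complex_of_real)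
  qed
  thus ?thesis using U A by blast
qed



lemma dg_mult: "mmult (dg a) (dg b) = dg (\<lambda>i. a i * b i)"
  unfolding mmult_dg_right by (auto simp: dg_def fun_eq_iff)

lemma conj_square:
  assumes "unitary_op E"
  shows "mmult (mmult E (mmult D (adj E))) (mmult E (mmult D' (adj E))) = mmult E (mmult (mmult D D') (adj E))"
proof -
  have "mmult (adj E) E = idop" using assms unfolding unitary_op_def by simp
  hence "mmult (mmult D (adj E)) (mmult E (mmult D' (adj E))) = mmult D (mmult D' (adj E))"
    by (metis mmult_assoc mmult_id_left)
  thus ?thesis by (simp add: mmult_assoc)
qed

lemma psd_sqrt_unique:
  fixes S T :: "'n::finite qop"
  assumes S: "psd S" and T: "psd T" and eq: "mmult S S = mmult T T"
  shows "S = T"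
proof -
  obtain F s where F: "unitary_op F" and s: "\<forall>i. s i \<ge> 0" and Sd: "S = mmult F (mmult (dg (\<lambda>i. of_real (s i))) (adj F))"
    using psd_decomp[OF S] by blast
  obtain G t where G: "unitary_op G" and t: "\<forall>i. t i \<ge> 0" and Td: "T = mmult G (mmult (dg (\<lambda>i. of_real (t i))) (adj G))"
    using psd_decomp[OF T] by blast
  define Ds where "Ds = dg (\<lambda>i. complex_of_real (s i))"
  define Dt where "Dt = dg (\<lambda>i. complex_of_real (t i))"
  define M where "M = mmult (adj G) F"
  have FF: "mmult (adj F) F = idop" "mmult F (adj F) = idop" using F unfolding unitary_op_def by auto
  have GG: "mmult (adj G) G = idop" "mmult G (adj G) = idop" using G unfolding unitary_op_def by auto
  have S2: "mmult S S = mmult F (mmult (mmult Ds Ds) (adj F))" unfolding Sd Ds_def by (rule conj_square[OF F])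
  have T2: "mmult T T = mmult G (mmult (mmult Dt Dt) (adj G))" unfolding Td Dt_def by (rule conj_square[OF G])
  have "mmult (adj G) (mmult (mmult S S) F) = mmult M (mmult Ds Ds)"
    unfolding S2 M_def by (simp add: mmult_assoc FF flip: mmult_assoc[of "adj F" F])
  moreover have "mmult (adj G) (mmult (mmult T T) F) = mmult (mmult Dt Dt) M"
    unfolding T2 M_def by (simp add: mmult_assoc GG flip: mmult_assoc[of "adj G" G])
  ultimately have MD2: "mmult M (mmult Ds Ds) = mmult (mmult Dt Dt) M" using eq by simp
  have MD: "mmult M Ds = mmult Dt M"
  proof -
    have MD2': "mmult M (dg (\<lambda>k. of_real (s k * s k))) = mmult (dg (\<lambda>l. of_real (t l * t l))) M"
      using MD2 unfolding Ds_def Dt_def dg_mult by (simp add: of_real_mult)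
    have "M l k * of_real (s k * s k) = of_real (t l * t l) * M l k" for l k
      using fun_cong[OF fun_cong[OF MD2', of l], of k] unfolding mmult_dg_right mmult_dg_left
      by simp
    hence "M l k * of_real (s k) = of_real (t l) * M l k" for l k
    proof -
      assume h: "\<And>l k. M l k * of_real (s k * s k) = of_real (t l * t l) * M l k"
      show ?thesis
      proof (cases "M l k = 0")
        case False
        with h[of l k] have "s k * s k = t l * t l" by (simp add: mult.commute flip: of_real_mult)
        hence "s k = t l" using s t by (metis abs_of_nonneg real_sqrt_abs2 power2_eq_square)
        thus ?thesis by (simp add: mult.commute)
      qed simp
    qed
    thus ?thesis unfolding Ds_def Dt_def mmult_dg_right mmult_dg_left by (auto intro!: ext)
  qed
  have "mmult (adj G) S = mmult (mmult M Ds) (adj F)" unfolding Sd M_def Ds_def by (simp add: mmult_assoc)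
  also have "\<dots> = mmult (mmult Dt M) (adj F)" using MD by simp
  also have "\<dots> = mmult Dt (adj G)" unfolding M_def by (simp add: mmult_assoc FF)
  finally have "mmult G (mmult (adj G) S) = mmult G (mmult Dt (adj G))" by simp
  thus ?thesis unfolding Td Dt_def by (simp flip: mmult_assoc add: GG)
qed

lemma psd_sqrt_exists:
  fixes A :: "'n::finite qop"
  assumes "psd A"
  shows "\<exists>S. psd S \<and> mmult S S = A"
proof -
  obtain E f where E: "unitary_op E" and f: "\<forall>i. f i \<ge> 0" and A: "A = mmult E (mmult (dg (\<lambda>i. of_real (f i))) (adj E))"
    using psd_decomp[OF assms] by blast
  define S where "S = mmult E (mmult (dg (\<lambda>i. of_real (sqrt (f i)))) (adj E))"
  have "psd S" unfolding S_def by (rule psd_conj_dg) (simp add: f)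
  moreover have "mmult S S = A" unfolding S_def conj_square[OF E] dg_mult A
    by (simp add: f flip: of_real_mult)
  ultimately show ?thesis by blast
qed

lemma msqrt:
  fixes A :: "'n::finite qop"
  assumes "psd A"
  shows "psd (msqrt A)" "mmult (msqrt A) (msqrt A) = A"
proof -
  have "\<exists>!S. psd S \<and> mmult S S = A"
    using psd_sqrt_exists[OF assms] psd_sqrt_unique by metis
  from theI'[OF this] have *: "psd (msqrt A) \<and> mmult (msqrt A) (msqrt A) = A"
    unfolding msqrt_def .
  show "psd (msqrt A)" using * by auto
  show "mmult (msqrt A) (msqrt A) = A" using * by auto
qed


lemma psd_square: assumes "psd S" shows "psd (mmult S S)"
proof -
  have H: "herm S" by (rule psd_herm[OF assms])
  show ?thesis unfolding psd_def
  proof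
    fix v
    have "(\<Sum>i\<in>UNIV. \<Sum>j\<in>UNIV. cnj (v i) * mmult S S i j * v j) = ip (mv S v) (mv S v)"
      unfolding qf_def[symmetric] qf_ip mv_mmult herm_ip[OF H] ..
    thus "Im (\<Sum>i\<in>UNIV. \<Sum>j\<in>UNIV. cnj (v i) * mmult S S i j * v j) = 0 \<and>
      0 \<le> Re (\<Sum>i\<in>UNIV. \<Sum>j\<in>UNIV. cnj (v i) * mmult S S i j * v j)"
      using ip_self_Im[of "mv S v"] ip_self_ge0[of "mv S v"] by simp
  qed
qed

lemma msqrt_eq:
  fixes S :: "'n::finite qop"
  assumes "psd S"
  shows "msqrt (mmult S S) = S"
  using msqrt[OF psd_square[OF assms]] psd_sqrt_unique assms by metis



definition col :: "'n qop \<Rightarrow> 'n \<Rightarrow> ('n \<Rightarrow> complex)" where "col E k = (\<lambda>i. E i k)"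

lemma ip_col: "unitary_op E \<Longrightarrow> ip (col E k) (col E l) = (if k = l then 1 else 0)"
  unfolding unitary_op_def col_def ip_def
  by (drule conjunct1, drule fun_cong[of _ _ k], drule fun_cong[of _ _ l]) (simp add: mmult_def adj_def idop_def)

lemma mv_col: "mv A (col E k) = col (mmult A E) k"
  unfolding mv_def col_def mmult_def by simp

lemma tr_unitary: "unitary_op E \<Longrightarrow> tr X = (\<Sum>k\<in>UNIV. ip (col E k) (mv X (col E k)))"
proof -
  assume U: "unitary_op E"
  have "tr X = tr (mmult (mmult X E) (adj E))" using U unfolding unitary_op_def by (simp add: mmult_assoc)
  also have "\<dots> = tr (mmult (adj E) (mmult X E))" by (rule tr_mmult_comm)
  also have "\<dots> = (\<Sum>k\<in>UNIV. ip (col E k) (mv X (col E k)))"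
    unfolding tr_def mv_col unfolding mmult_def adj_def col_def ip_def by simp
  finally show ?thesis .
qed

lemma conj_dg_col:
  assumes U: "unitary_op E"
  shows "mv (mmult E (mmult (dg d) (adj E))) (col E k) = (\<lambda>i. d k * col E k i)"
proof -
  have "mmult (mmult E (mmult (dg d) (adj E))) E = mmult E (dg d)"
    using U unfolding unitary_op_def by (simp add: mmult_assoc)
  thus ?thesis by (simp only: mv_col mmult_dg_right) (simp add: col_def mult.commute)
qed

lemma tr_conj_dg: "unitary_op E \<Longrightarrow> tr (mmult E (mmult (dg d) (adj E))) = (\<Sum>k\<in>UNIV. d k)"
proof -
  assume U: "unitary_op E"
  have "tr (mmult E (mmult (dg d) (adj E))) = tr (mmult (mmult (dg d) (adj E)) E)" by (rule tr_mmult_comm)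
  also have "\<dots> = tr (dg d)" using U unfolding unitary_op_def by (simp add: mmult_assoc)
  also have "\<dots> = (\<Sum>k\<in>UNIV. d k)" unfolding tr_def dg_def by simp
  finally show ?thesis .
qed

lemma cs_unit:
  assumes "ip u u = 1"
  shows "cmod (ip u v) \<le> sqrt (Re (ip v v))"
proof -
  define w where "w = (\<lambda>i. v i - ip u v * u i)"
  have "ip w w = ip v v - cnj (ip u v) * ip u v"
  proof -
    have "ip w w = ip v v - ip u v * ip v u - cnj (ip u v) * ip u v + cnj (ip u v) * ip u v * ip u u"
      unfolding w_def by (simp only: ip_diff_left ip_diff_right ip_scale_left ip_scale_right) (simp add: algebra_simps)
    thus ?thesis using assms ip_sym[of v u] by (simp add: algebra_simps)
  qed
  hence "Re (ip v v) - (cmod (ip u v))^2 = Re (ip w w)"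
  proof -
    assume h: "ip w w = ip v v - cnj (ip u v) * ip u v"
    have "cnj (ip u v) * ip u v = of_real ((cmod (ip u v))^2)" by (simp only: complex_norm_square mult.commute)
    with h show ?thesis by simp
  qed
  hence "(cmod (ip u v))^2 \<le> Re (ip v v)" using ip_self_ge0[of w] by linarith
  thus ?thesis by (simp add: real_le_rsqrt)
qed


lemma psd_adj_mult: "psd (mmult (adj X) X)"
  unfolding psd_def
proof
  fix v
  have "(\<Sum>i\<in>UNIV. \<Sum>j\<in>UNIV. cnj (v i) * mmult (adj X) X i j * v j) = ip (mv X v) (mv X v)"
    unfolding qf_def[symmetric] qf_ip mv_mmult by (metis adj_adj ip_adj)
  thus "Im (\<Sum>i\<in>UNIV. \<Sum>j\<in>UNIV. cnj (v i) * mmult (adj X) X i j * v j) = 0 \<and>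
      0 \<le> Re (\<Sum>i\<in>UNIV. \<Sum>j\<in>UNIV. cnj (v i) * mmult (adj X) X i j * v j)"
    using ip_self_Im[of "mv X v"] ip_self_ge0[of "mv X v"] by simp
qed

lemma trace_norm_ge_Re_tr: "Re (tr X) \<le> trace_norm X"
proof -
  define P where "P = msqrt (mmult (adj X) X)"
  have Ppsd: "psd P" and PP: "mmult P P = mmult (adj X) X" unfolding P_def using msqrt psd_adj_mult by auto
  obtain E p where U: "unitary_op E" and p: "\<forall>i. p i \<ge> 0" and Pd: "P = mmult E (mmult (dg (\<lambda>i. of_real (p i))) (adj E))"
    using psd_decomp[OF Ppsd] by blast
  have tn: "trace_norm X = (\<Sum>k\<in>UNIV. p k)"
    unfolding trace_norm_def P_def[symmetric] by (subst Pd, subst tr_conj_dg[OF U]) simp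
  have bound: "Re (ip (col E k) (mv X (col E k))) \<le> p k" for k
  proof -
    let ?c = "col E k"
    have Pc: "mv P ?c = (\<lambda>i. of_real (p k) * ?c i)" unfolding Pd by (rule conj_dg_col[OF U])
    have "ip (mv X ?c) (mv X ?c) = ip ?c (mv (adj X) (mv X ?c))" by (metis adj_adj ip_adj)
    also have "\<dots> = ip ?c (mv P (mv P ?c))" unfolding mv_mmult[symmetric] PP ..
    also have "\<dots> = of_real (p k * p k) * ip ?c ?c" unfolding Pc mv_scale ip_scale_right by simp
    also have "\<dots> = of_real (p k * p k)" using ip_col[OF U, of k k] by simp
    finally have "sqrt (Re (ip (mv X ?c) (mv X ?c))) = p k" using p by simp
    moreover have "cmod (ip ?c (mv X ?c)) \<le> sqrt (Re (ip (mv X ?c) (mv X ?c)))"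
      by (rule cs_unit) (simp add: ip_col[OF U])
    ultimately show ?thesis using complex_Re_le_cmod order_trans by metis
  qed
  have "Re (tr X) = (\<Sum>k\<in>UNIV. Re (ip (col E k) (mv X (col E k))))" unfolding tr_unitary[OF U] by simp
  also have "\<dots> \<le> (\<Sum>k\<in>UNIV. p k)" by (rule sum_mono) (rule bound)
  finally show ?thesis unfolding tn .
qed

lemma trace_norm_unitary_left: "mmult (adj S) S = idop \<Longrightarrow> trace_norm (mmult S Y) = trace_norm Y"
  unfolding trace_norm_def adj_mmult by (simp add: mmult_assoc flip: mmult_assoc[of "adj S" S])



lemma mv_msub: "mv (msub A B) v = (\<lambda>i. mv A v i - mv B v i)"
  unfolding mv_def msub_def by (simp add: left_diff_distrib sum_subtractf)
lemma adj_msub: "adj (msub A B) = msub (adj A) (adj B)"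
  unfolding adj_def msub_def by auto
lemma herm_msub: "herm A \<Longrightarrow> herm B \<Longrightarrow> herm (msub A B)"
  unfolding herm_def adj_msub by simp
lemma tr_msub: "tr (msub A B) = tr A - tr B"
  unfolding tr_def msub_def by (simp add: sum_subtractf)
lemma mmult_msub_left: "mmult (msub A B) C = msub (mmult A C) (mmult B C)"
  unfolding mmult_def msub_def by (auto intro!: ext simp: left_diff_distrib sum_subtractf)
lemma mmult_msub_right: "mmult C (msub A B) = msub (mmult C A) (mmult C B)"
  unfolding mmult_def msub_def by (auto intro!: ext simp: right_diff_distrib sum_subtractf)
lemma adj_conj_dg: "adj (mmult E (mmult (dg d) (adj E))) = mmult E (mmult (dg (\<lambda>i. cnj (d i))) (adj E))"
proof -
  have "adj (dg d) = dg (\<lambda>i. cnj (d i))" by (auto simp: adj_def dg_def fun_eq_iff)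
  thus ?thesis unfolding adj_mmult by (simp add: mmult_assoc)
qed

lemma powers_stormer:
  fixes A B :: "'n::finite qop"
  assumes A: "psd A" and B: "psd B"
  shows "Re (tr (mmult (msub A B) (msub A B))) \<le> trace_norm (msub (mmult A A) (mmult B B))"
proof -
  define Q where "Q = msub A B"
  have HA: "herm A" and HB: "herm B" using A B psd_herm by auto
  have HQ: "herm Q" unfolding Q_def using HA HB by (rule herm_msub)
  obtain E q where U: "unitary_op E" and Qd: "Q = mmult E (mmult (dg (\<lambda>i. of_real (q i))) (adj E))"
    using spectral[OF HQ] by blast
  define sg where "sg k = (if q k \<ge> 0 then 1 else -1 :: real)" for k
  define Sg where "Sg = mmult E (mmult (dg (\<lambda>i. of_real (sg i))) (adj E))"
  have sgsq: "sg k * sg k = 1" for k unfolding sg_def by auto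
  have SgH: "adj Sg = Sg" unfolding Sg_def adj_conj_dg by simp
  have SgSg: "mmult (adj Sg) Sg = idop"
  proof -
    have "mmult Sg Sg = mmult E (mmult (dg (\<lambda>i. of_real (sg i * sg i))) (adj E))"
      unfolding Sg_def conj_square[OF U] dg_mult by simp
    also have "\<dots> = idop" unfolding sgsq using U unfolding unitary_op_def
      by (simp add: dg_def idop_def flip: idop_def) 
    finally show ?thesis unfolding SgH .
  qed
  define Y where "Y = msub (mmult A A) (mmult B B)"
  have f1: "Re (tr (mmult Sg Y)) \<le> trace_norm Y"
    using trace_norm_ge_Re_tr[of "mmult Sg Y"] trace_norm_unitary_left[OF SgSg] by simp
  have f2: "Re (tr (mmult Sg Y)) = (\<Sum>k\<in>UNIV. sg k * Re (ip (col E k) (mv Y (col E k))))"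
  proof -
    have "ip (col E k) (mv (mmult Sg Y) (col E k)) = of_real (sg k) * ip (col E k) (mv Y (col E k))" for k
    proof -
      have "ip (col E k) (mv (mmult Sg Y) (col E k)) = ip (mv Sg (col E k)) (mv Y (col E k))"
        unfolding mv_mmult by (metis SgH ip_adj)
      also have "\<dots> = of_real (sg k) * ip (col E k) (mv Y (col E k))"
        unfolding Sg_def conj_dg_col[OF U] ip_scale_left by simp
      finally show ?thesis .
    qed
    thus ?thesis unfolding tr_unitary[OF U] by simp
  qed
  have f3: "q k * q k \<le> sg k * Re (ip (col E k) (mv Y (col E k)))" for k
  proof -
    let ?c = "col E k"
    have c1: "ip ?c ?c = 1" using ip_col[OF U] by simp
    have Qc: "mv Q ?c = (\<lambda>i. of_real (q k) * ?c i)" unfolding Qd by (rule conj_dg_col[OF U])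
    have Ac: "mv A ?c = (\<lambda>i. mv B ?c i + of_real (q k) * ?c i)"
      using Qc unfolding Q_def mv_msub by (auto simp: fun_eq_iff algebra_simps dest: fun_cong)
    define b where "b = ip ?c (mv B ?c)"
    have bc: "ip (mv B ?c) ?c = b" unfolding b_def using herm_ip[OF HB] by metis
    have Yc: "ip ?c (mv Y ?c) = ip (mv A ?c) (mv A ?c) - ip (mv B ?c) (mv B ?c)"
      unfolding Y_def mv_msub ip_diff_right mv_mmult using herm_ip[OF HA] herm_ip[OF HB] by metis
    also have "\<dots> = of_real (q k) * b + of_real (q k) * b + of_real (q k * q k)"
      unfolding Ac by (simp add: ip_add_left ip_add_right ip_scale_left ip_scale_right bc c1 b_def algebra_simps)
    finally have ReY: "Re (ip ?c (mv Y ?c)) = 2 * q k * Re b + q k * q k" by simp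
    have b0: "Re b \<ge> 0" using B[unfolded psd_def qf_def[symmetric] qf_ip, rule_format, of ?c] b_def by simp
    have "ip ?c (mv A ?c) = b + of_real (q k)" unfolding Ac ip_add_right ip_scale_right c1 b_def by simp
    hence a0: "Re b + q k \<ge> 0" using A[unfolded psd_def qf_def[symmetric] qf_ip, rule_format, of ?c] by simp
    show ?thesis unfolding ReY sg_def
    proof (cases "q k \<ge> 0")
      case True thus "q k * q k \<le> (if 0 \<le> q k then 1 else - 1) * (2 * q k * Re b + q k * q k)"
        using b0 by simp
    next
      case False
      hence "- q k * (Re b + q k) \<ge> 0" using a0 by (intro mult_nonneg_nonneg) auto
      thus "q k * q k \<le> (if 0 \<le> q k then 1 else - 1) * (2 * q k * Re b + q k * q k)"
        using False by (simp add: algebra_simps)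
    qed
  qed
  have f4: "Re (tr (mmult Q Q)) = (\<Sum>k\<in>UNIV. q k * q k)"
    unfolding Qd conj_square[OF U] dg_mult tr_conj_dg[OF U] by simp
  have "(\<Sum>k\<in>UNIV. q k * q k) \<le> (\<Sum>k\<in>UNIV. sg k * Re (ip (col E k) (mv Y (col E k))))"
    by (rule sum_mono) (rule f3)
  with f1 f2 f4 show ?thesis unfolding Q_def Y_def by linarith
qed


lemma fidelity_bound:
  fixes \<rho> \<sigma> :: "'n::finite qop"
  assumes r: "density_op \<rho>" and s: "density_op \<sigma>"
  shows "gen_fidelity \<rho> \<sigma> \<ge> 1 - trace_norm (msub \<rho> \<sigma>) / 2"
proof -
  define A where "A = msqrt \<rho>"
  define B where "B = msqrt \<sigma>"
  have A: "psd A" "mmult A A = \<rho>" using r msqrt unfolding A_def density_op_def by auto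
  have B: "psd B" "mmult B B = \<sigma>" using s msqrt unfolding B_def density_op_def by auto
  have tr1: "tr \<rho> = 1" "tr \<sigma> = 1" using r s unfolding density_op_def by auto
  have "tr (mmult (msub A B) (msub A B)) = tr \<rho> - tr (mmult B A) - (tr (mmult A B) - tr \<sigma>)"
    unfolding mmult_msub_left mmult_msub_right tr_msub A(2) B(2) ..
  also have "\<dots> = 2 - 2 * tr (mmult A B)" using tr1 tr_mmult_comm[of B A] by simp
  finally have "Re (tr (mmult (msub A B) (msub A B))) = 2 - 2 * Re (tr (mmult A B))" by simp
  with powers_stormer[OF A(1) B(1)] A(2) B(2)
  have "2 - 2 * Re (tr (mmult A B)) \<le> trace_norm (msub \<rho> \<sigma>)" by simp
  moreover have "Re (tr (mmult A B)) \<le> trace_norm (mmult A B)" by (rule trace_norm_ge_Re_tr)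
  moreover have "gen_fidelity \<rho> \<sigma> = trace_norm (mmult A B)"
    unfolding gen_fidelity_def A_def B_def using tr1 by simp
  ultimately show ?thesis by linarith
qed



lemma psd_qf: "psd A \<longleftrightarrow> (\<forall>v. Im (qf A v) = 0 \<and> Re (qf A v) \<ge> 0)"
  unfolding psd_def qf_def ..

lemma sum_if_eq: fixes a :: "'m::finite" shows "(\<Sum>m\<in>UNIV. if P \<and> a = m then g m else 0) = (if P then g a else (0::complex))"
proof -
  have "(\<Sum>m\<in>UNIV. if P \<and> a = m then g m else 0) = (\<Sum>m\<in>UNIV. if m = a then (if P then g a else 0) else 0)"
    by (rule sum.cong) auto
  also have "\<dots> = (if P then g a else 0)" by (cases P) simp_all
  finally show ?thesis .
qed

lemma qf_block:
  fixes B :: "'t::finite \<Rightarrow> 'm::finite qop" and v :: "'x::finite \<Rightarrow> complex"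
    and ok :: "'t \<Rightarrow> 'x \<Rightarrow> bool" and \<phi> :: "'t \<Rightarrow> 'x \<Rightarrow> 'm" and c :: "'t \<Rightarrow> complex"
  defines "w \<equiv> \<lambda>t m. \<Sum>x\<in>UNIV. if ok t x \<and> \<phi> t x = m then v x else 0"
  shows "qf (\<lambda>x y. \<Sum>t\<in>UNIV. if ok t x \<and> ok t y then c t * B t (\<phi> t x) (\<phi> t y) else 0) v
       = (\<Sum>t\<in>UNIV. c t * qf (B t) (w t))"
proof -
  have inner: "qf (B t) (w t) = (\<Sum>x\<in>UNIV. \<Sum>y\<in>UNIV. if ok t x \<and> ok t y then cnj (v x) * B t (\<phi> t x) (\<phi> t y) * v y else 0)" for t
  proof -
    have "qf (B t) (w t) = (\<Sum>m\<in>UNIV. \<Sum>m'\<in>UNIV. \<Sum>x\<in>UNIV. \<Sum>y\<in>UNIV.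
        (if ok t x \<and> \<phi> t x = m then cnj (v x) else 0) * B t m m' * (if ok t y \<and> \<phi> t y = m' then v y else 0))"
      unfolding qf_def w_def
      by (simp add: cnj_sum sum_distrib_left sum_distrib_right if_distrib[of cnj] cong: if_cong)
        (rule sum.cong[OF refl], rule sum.cong[OF refl], rule sum.swap)
    also have "\<dots> = (\<Sum>x\<in>UNIV. \<Sum>y\<in>UNIV. \<Sum>m\<in>UNIV. \<Sum>m'\<in>UNIV.
        (if ok t x \<and> \<phi> t x = m then cnj (v x) else 0) * B t m m' * (if ok t y \<and> \<phi> t y = m' then v y else 0))"
      by (subst sum.swap, subst (2) sum.swap, subst sum.swap) (subst sum.swap[of _ UNIV UNIV], rule refl)
    also have "\<dots> = (\<Sum>x\<in>UNIV. \<Sum>y\<in>UNIV. if ok t x \<and> ok t y then cnj (v x) * B t (\<phi> t x) (\<phi> t y) * v y else 0)"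
    proof (intro sum.cong refl)
      fix x y
      have "(\<Sum>m\<in>UNIV. \<Sum>m'\<in>UNIV. (if ok t x \<and> \<phi> t x = m then cnj (v x) else 0) * B t m m' * (if ok t y \<and> \<phi> t y = m' then v y else 0))
          = (\<Sum>m\<in>UNIV. if ok t x \<and> \<phi> t x = m then (\<Sum>m'\<in>UNIV. if ok t y \<and> \<phi> t y = m' then cnj (v x) * B t m m' * v y else 0) else 0)"
        by (intro sum.cong refl) (auto intro!: sum.cong)
      also have "\<dots> = (if ok t x \<and> ok t y then cnj (v x) * B t (\<phi> t x) (\<phi> t y) * v y else 0)"
        by (simp only: sum_if_eq) simp
      finally show "(\<Sum>m\<in>UNIV. \<Sum>m'\<in>UNIV. (if ok t x \<and> \<phi> t x = m then cnj (v x) else 0) * B t m m' * (if ok t y \<and> \<phi> t y = m' then v y else 0))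
          = (if ok t x \<and> ok t y then cnj (v x) * B t (\<phi> t x) (\<phi> t y) * v y else 0)" .
    qed
    finally show ?thesis .
  qed
  have "qf (\<lambda>x y. \<Sum>t\<in>UNIV. if ok t x \<and> ok t y then c t * B t (\<phi> t x) (\<phi> t y) else 0) v
      = (\<Sum>x\<in>UNIV. \<Sum>y\<in>UNIV. \<Sum>t\<in>UNIV. c t * (if ok t x \<and> ok t y then cnj (v x) * B t (\<phi> t x) (\<phi> t y) * v y else 0))"
    unfolding qf_def sum_distrib_left sum_distrib_right by (intro sum.cong refl) auto
  also have "\<dots> = (\<Sum>x\<in>UNIV. \<Sum>t\<in>UNIV. \<Sum>y\<in>UNIV. c t * (if ok t x \<and> ok t y then cnj (v x) * B t (\<phi> t x) (\<phi> t y) * v y else 0))"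
    by (rule sum.cong[OF refl], rule sum.swap)
  also have "\<dots> = (\<Sum>t\<in>UNIV. \<Sum>x\<in>UNIV. \<Sum>y\<in>UNIV. c t * (if ok t x \<and> ok t y then cnj (v x) * B t (\<phi> t x) (\<phi> t y) * v y else 0))"
    by (rule sum.swap)
  also have "\<dots> = (\<Sum>t\<in>UNIV. c t * (\<Sum>x\<in>UNIV. \<Sum>y\<in>UNIV. if ok t x \<and> ok t y then cnj (v x) * B t (\<phi> t x) (\<phi> t y) * v y else 0))"
    by (simp add: sum_distrib_left)
  finally show ?thesis unfolding inner .
qed

lemma psd_block:
  fixes B :: "'t::finite \<Rightarrow> 'm::finite qop" and ok :: "'t \<Rightarrow> 'x::finite \<Rightarrow> bool" and \<phi> :: "'t \<Rightarrow> 'x \<Rightarrow> 'm"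
  assumes "\<And>t. psd (B t)" and "\<And>t. c t \<ge> 0"
  shows "psd ((\<lambda>x y. \<Sum>t\<in>UNIV. if ok t x \<and> ok t y then of_real (c t) * B t (\<phi> t x) (\<phi> t y) else 0) :: 'x qop)"
  unfolding psd_qf
proof
  fix v :: "'x \<Rightarrow> complex"
  let ?w = "\<lambda>t m. \<Sum>x\<in>UNIV. if ok t x \<and> \<phi> t x = m then v x else 0"
  have eq: "qf ((\<lambda>x y. \<Sum>t\<in>UNIV. if ok t x \<and> ok t y then of_real (c t) * B t (\<phi> t x) (\<phi> t y) else 0) :: 'x qop) v
     = (\<Sum>t\<in>UNIV. of_real (c t) * qf (B t) (?w t))" by (rule qf_block)
  have "Im (qf (B t) (?w t)) = 0 \<and> Re (qf (B t) (?w t)) \<ge> 0" for t using assms(1)[of t] unfolding psd_qf by blast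
  thus "Im (qf ((\<lambda>x y. \<Sum>t\<in>UNIV. if ok t x \<and> ok t y then of_real (c t) * B t (\<phi> t x) (\<phi> t y) else 0) :: 'x qop) v) = 0 \<and>
     0 \<le> Re (qf ((\<lambda>x y. \<Sum>t\<in>UNIV. if ok t x \<and> ok t y then of_real (c t) * B t (\<phi> t x) (\<phi> t y) else 0) :: 'x qop) v)"
    unfolding eq using assms(2) by (simp add: sum_nonneg)
qed



lemma sum_pair: "(\<Sum>t\<in>(UNIV::('a::finite \<times> 'b::finite) set). f t) = (\<Sum>a\<in>UNIV. \<Sum>b\<in>UNIV. f (a, b))"
proof -
  have "(\<Sum>a\<in>UNIV. \<Sum>b\<in>UNIV. f (a, b)) = (\<Sum>(a, b)\<in>UNIV \<times> UNIV. f (a, b))" by (rule sum.cartesian_product)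
  thus ?thesis by (simp only: case_prod_eta UNIV_Times_UNIV)
qed

lemma ptrace_block: "ptrace_fst X = (\<lambda>x y. \<Sum>t\<in>UNIV. if True \<and> True then of_real 1 * X (t, x) (t, y) else 0)"
  unfolding ptrace_fst_def by simp

lemma psd_ptrace: "psd X \<Longrightarrow> psd (ptrace_fst X)"
  unfolding ptrace_block by (rule psd_block) auto

lemma tensor_id_block:
  fixes P :: "'b::finite qop"
  shows "tensor (smul (of_real c) (idop :: 'k::finite qop)) P =
   (\<lambda>x y. \<Sum>t\<in>UNIV. if fst x = t \<and> fst y = t then of_real c * P (snd x) (snd y) else 0)"
proof (intro ext)
  fix x y :: "'k \<times> 'b"
  have "(\<Sum>t\<in>UNIV. if fst x = t \<and> fst y = t then of_real c * P (snd x) (snd y) else 0)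
      = (if fst x = fst y then of_real c * P (snd x) (snd y) else 0)"
    by (subst sum_if_eq[of "fst x = fst y" "fst x" "\<lambda>_. of_real c * P (snd x) (snd y)", symmetric])
      (intro sum.cong, auto)
  thus "tensor (smul (of_real c) idop) P x y = (\<Sum>t\<in>UNIV. if fst x = t \<and> fst y = t then of_real c * P (snd x) (snd y) else 0)"
    unfolding tensor_def smul_def idop_def by (cases x, cases y) auto
qed

lemma psd_tensor_id: "psd P \<Longrightarrow> c \<ge> 0 \<Longrightarrow> psd (tensor (smul (of_real c) (idop :: 'k::finite qop)) P)"
  unfolding tensor_id_block by (rule psd_block[where B="\<lambda>_. P" and c="\<lambda>_. c"])

lemma cq_block:
  fixes M :: "'j::finite \<Rightarrow> ('a::finite \<times> 'b::finite) qop"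
  shows "cq_state M = (\<lambda>x y. \<Sum>t\<in>UNIV. if snd (snd x) = t \<and> snd (snd y) = t then
       of_real (1 / real CARD('j)) * M t (fst x, fst (snd x)) (fst y, fst (snd y)) else 0)"
proof (intro ext)
  fix x y :: "'a \<times> 'b \<times> 'j"
  have "(\<Sum>t\<in>UNIV. if snd (snd x) = t \<and> snd (snd y) = t then
       of_real (1 / real CARD('j)) * M t (fst x, fst (snd x)) (fst y, fst (snd y)) else 0)
    = (if snd (snd x) = snd (snd y) then of_real (1 / real CARD('j)) * M (snd (snd x)) (fst x, fst (snd x)) (fst y, fst (snd y)) else 0)"
    by (subst sum_if_eq[symmetric]) (intro sum.cong, auto)
  thus "cq_state M x y = (\<Sum>t\<in>UNIV. if snd (snd x) = t \<and> snd (snd y) = t then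
       of_real (1 / real CARD('j)) * M t (fst x, fst (snd x)) (fst y, fst (snd y)) else 0)"
    unfolding cq_state_def by (cases x, cases y) (auto simp: divide_inverse mult.commute)
qed

lemma psd_cq: fixes M :: "'j::finite \<Rightarrow> ('a::finite \<times> 'b::finite) qop"
  shows "(\<And>j. psd (M j)) \<Longrightarrow> psd (cq_state M)"
  unfolding cq_block by (rule psd_block) auto

lemma pinch_block:
  fixes Y :: "(('a1::finite \<times> 'a2::finite) \<times> 'e::finite) qop"
  shows "pinch_relabel Y = (\<lambda>x y. \<Sum>t\<in>UNIV. if fst x = fst t \<and> fst y = fst t then
       of_real 1 * Y (t, snd x) (t, snd y) else 0)"
proof (intro ext)
  fix x y :: "'a1 \<times> 'e"
  have "(\<Sum>t\<in>(UNIV::('a1 \<times> 'a2) set). if fst x = fst t \<and> fst y = fst t then of_real 1 * Y (t, snd x) (t, snd y) else 0)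
      = (\<Sum>k\<in>UNIV. \<Sum>a2\<in>UNIV. if fst x = k \<and> fst y = k then Y ((k, a2), snd x) ((k, a2), snd y) else 0)"
    by (simp only: sum_pair of_real_1 mult_1 fst_conv)
  also have "\<dots> = (\<Sum>k\<in>UNIV. if fst x = k \<and> fst y = k then (\<Sum>a2\<in>UNIV. Y ((k, a2), snd x) ((k, a2), snd y)) else 0)"
    by (intro sum.cong refl) auto
  also have "\<dots> = (if fst x = fst y then (\<Sum>a2\<in>UNIV. Y ((fst x, a2), snd x) ((fst x, a2), snd y)) else 0)"
    by (subst sum_if_eq[symmetric]) (intro sum.cong, auto)
  finally show "pinch_relabel Y x y = (\<Sum>t\<in>UNIV. if fst x = fst t \<and> fst y = fst t then
       of_real 1 * Y (t, snd x) (t, snd y) else 0)"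
    unfolding pinch_relabel_def by (cases x, cases y) auto
qed

lemma psd_pinch: "psd Y \<Longrightarrow> psd (pinch_relabel Y)"
  unfolding pinch_block by (rule psd_block) auto

lemma psd_conj: assumes "psd X" shows "psd (mmult W (mmult X (adj W)))"
  unfolding psd_qf
proof
  fix v
  have "qf (mmult W (mmult X (adj W))) v = qf X (mv (adj W) v)"
    unfolding qf_ip mv_mmult ip_adj ..
  thus "Im (qf (mmult W (mmult X (adj W))) v) = 0 \<and> 0 \<le> Re (qf (mmult W (mmult X (adj W))) v)"
    using assms unfolding psd_qf by simp
qed

lemma psd_meas: "psd X \<Longrightarrow> psd (meas U X)"
  unfolding meas_def by (intro psd_pinch psd_conj)


lemma tr_pair: "tr (X :: ('a::finite \<times> 'b::finite) qop) = (\<Sum>a\<in>UNIV. \<Sum>b\<in>UNIV. X (a, b) (a, b))"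
  unfolding tr_def sum_pair ..

lemma tr_ptrace: "tr (ptrace_fst X) = tr X"
  unfolding tr_pair unfolding tr_def ptrace_fst_def by (rule sum.swap)

lemma tr_tensor_id:
  fixes P :: "'b::finite qop"
  shows "tr (tensor (smul c (idop :: 'k::finite qop)) P) = c * of_nat CARD('k) * tr P"
  unfolding tr_pair tensor_def smul_def idop_def tr_def by (simp add: sum_distrib_left mult_ac)

lemma tr_cq:
  fixes M :: "'j::finite \<Rightarrow> ('a::finite \<times> 'b::finite) qop"
  shows "tr (cq_state M) = (\<Sum>j\<in>UNIV. tr (M j)) / of_nat CARD('j)"
proof -
  have "tr (cq_state M) = (\<Sum>a\<in>UNIV. \<Sum>b\<in>UNIV. \<Sum>j\<in>UNIV. M j (a, b) (a, b) / of_nat CARD('j))"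
    unfolding tr_pair sum_pair cq_state_def by simp
  also have "\<dots> = (\<Sum>a\<in>UNIV. \<Sum>j\<in>UNIV. \<Sum>b\<in>UNIV. M j (a, b) (a, b) / of_nat CARD('j))"
    by (rule sum.cong[OF refl], rule sum.swap)
  also have "\<dots> = (\<Sum>j\<in>UNIV. \<Sum>a\<in>UNIV. \<Sum>b\<in>UNIV. M j (a, b) (a, b) / of_nat CARD('j))"
    by (rule sum.swap)
  also have "\<dots> = (\<Sum>j\<in>UNIV. tr (M j)) / of_nat CARD('j)"
    unfolding tr_pair by (simp add: sum_divide_distrib)
  finally show ?thesis .
qed

lemma tr_pinch:
  fixes Y :: "(('a1::finite \<times> 'a2::finite) \<times> 'e::finite) qop"
  shows "tr (pinch_relabel Y) = tr Y"
proof -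
  have "tr (pinch_relabel Y) = (\<Sum>k\<in>UNIV. \<Sum>e\<in>UNIV. \<Sum>a2\<in>UNIV. Y ((k, a2), e) ((k, a2), e))"
    unfolding tr_pair pinch_relabel_def by simp
  also have "\<dots> = (\<Sum>k\<in>UNIV. \<Sum>a2\<in>UNIV. \<Sum>e\<in>UNIV. Y ((k, a2), e) ((k, a2), e))"
    by (rule sum.cong[OF refl], rule sum.swap)
  also have "\<dots> = tr Y" unfolding tr_pair sum_pair ..
  finally show ?thesis .
qed

lemma tensor_mult:
  fixes A C :: "'a::finite qop" and B D :: "'b::finite qop"
  shows "mmult (tensor A B) (tensor C D) = tensor (mmult A C) (mmult B D)"
proof (intro ext)
  fix x y :: "'a \<times> 'b"
  show "mmult (tensor A B) (tensor C D) x y = tensor (mmult A C) (mmult B D) x y"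
    unfolding mmult_def tensor_def sum_pair
    by (cases x, cases y) (simp add: sum_product mult_ac)
qed

lemma adj_tensor: "adj (tensor A B) = tensor (adj A) (adj B)"
  unfolding adj_def tensor_def by (auto intro!: ext)

lemma tensor_idop: "tensor (idop :: 'a qop) (idop :: 'b qop) = idop"
  unfolding tensor_def idop_def by (auto intro!: ext)

lemma unitary_tensor: "unitary_op U \<Longrightarrow> unitary_op (tensor U (idop :: 'b::finite qop))"
  unfolding unitary_op_def adj_tensor tensor_mult by (simp add: tensor_idop)

lemma tr_meas:
  fixes U :: "('a1::finite \<times> 'a2::finite) qop" and X :: "(('a1 \<times> 'a2) \<times> 'e::finite) qop"
  assumes "unitary_op U"
  shows "tr (meas U X) = tr X"
proof -
  let ?W = "tensor U (idop :: 'e qop)"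
  have W: "mmult (adj ?W) ?W = idop" using unitary_tensor[OF assms] unfolding unitary_op_def by blast
  have "tr (mmult ?W (mmult X (adj ?W))) = tr (mmult (mmult X (adj ?W)) ?W)" by (rule tr_mmult_comm)
  also have "\<dots> = tr X" by (simp add: mmult_assoc W)
  finally show ?thesis unfolding meas_def tr_pinch .
qed



definition bd :: "('j::finite \<Rightarrow> ('a \<times> 'b) qop) \<Rightarrow> ('a \<times> ('b \<times> 'j)) qop" where
  "bd M = (\<lambda>(k, (e, j)) (k', (e', j')). if j = j' then M j (k, e) (k', e') else 0)"

lemma bd_block:
  fixes M :: "'j::finite \<Rightarrow> ('a::finite \<times> 'b::finite) qop"
  shows "bd M = (\<lambda>x y. \<Sum>t\<in>UNIV. if snd (snd x) = t \<and> snd (snd y) = t then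
       of_real 1 * M t (fst x, fst (snd x)) (fst y, fst (snd y)) else 0)"
proof (intro ext)
  fix x y :: "'a \<times> 'b \<times> 'j"
  have "(\<Sum>t\<in>UNIV. if snd (snd x) = t \<and> snd (snd y) = t then
       of_real 1 * M t (fst x, fst (snd x)) (fst y, fst (snd y)) else 0)
    = (if snd (snd x) = snd (snd y) then of_real 1 * M (snd (snd x)) (fst x, fst (snd x)) (fst y, fst (snd y)) else 0)"
    by (subst sum_if_eq[symmetric]) (intro sum.cong, auto)
  thus "bd M x y = (\<Sum>t\<in>UNIV. if snd (snd x) = t \<and> snd (snd y) = t then
       of_real 1 * M t (fst x, fst (snd x)) (fst y, fst (snd y)) else 0)"
    unfolding bd_def by (cases x, cases y) auto
qed

lemma psd_bd: fixes M :: "'j::finite \<Rightarrow> ('a::finite \<times> 'b::finite) qop"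
  shows "(\<And>j. psd (M j)) \<Longrightarrow> psd (bd M)"
  unfolding bd_block by (rule psd_block) auto

lemma adj_bd: "adj (bd M) = bd (\<lambda>j. adj (M j))"
  unfolding adj_def bd_def by (auto intro!: ext)

lemma mmult_bd:
  fixes A B :: "'j::finite \<Rightarrow> ('a::finite \<times> 'b::finite) qop"
  shows "mmult (bd A) (bd B) = bd (\<lambda>j. mmult (A j) (B j))"
proof (intro ext)
  fix x y :: "'a \<times> 'b \<times> 'j"
  obtain k e j where x: "x = (k, e, j)" by (cases x) auto
  obtain k' e' j' where y: "y = (k', e', j')" by (cases y) auto
  have "mmult (bd A) (bd B) x y = (\<Sum>k''\<in>UNIV. \<Sum>e''\<in>UNIV. \<Sum>j''\<in>UNIV.
      (if j = j'' then A j (k, e) (k'', e'') else 0) * (if j'' = j' then B j'' (k'', e'') (k', e') else 0))"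
    unfolding mmult_def bd_def x y sum_pair by simp
  also have "\<dots> = (\<Sum>k''\<in>UNIV. \<Sum>e''\<in>UNIV. if j = j' then A j (k, e) (k'', e'') * B j (k'', e'') (k', e') else 0)"
  proof (intro sum.cong refl)
    fix k'' e''
    have "(\<Sum>j''\<in>UNIV. (if j = j'' then A j (k, e) (k'', e'') else 0) * (if j'' = j' then B j'' (k'', e'') (k', e') else 0))
        = (\<Sum>j''\<in>UNIV. if True \<and> j = j'' then (if j'' = j' then A j (k, e) (k'', e'') * B j'' (k'', e'') (k', e') else 0) else 0)"
      by (intro sum.cong) auto
    also have "\<dots> = (if j = j' then A j (k, e) (k'', e'') * B j (k'', e'') (k', e') else 0)"
      by (simp only: sum_if_eq) simp
    finally show "(\<Sum>j''\<in>UNIV. (if j = j'' then A j (k, e) (k'', e'') else 0) * (if j'' = j' then B j'' (k'', e'') (k', e') else 0))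
        = (if j = j' then A j (k, e) (k'', e'') * B j (k'', e'') (k', e') else 0)" .
  qed
  also have "\<dots> = bd (\<lambda>j. mmult (A j) (B j)) x y"
    unfolding bd_def mmult_def x y sum_pair by simp
  finally show "mmult (bd A) (bd B) x y = bd (\<lambda>j. mmult (A j) (B j)) x y" .
qed

lemma tr_bd:
  fixes M :: "'j::finite \<Rightarrow> ('a::finite \<times> 'b::finite) qop"
  shows "tr (bd M) = (\<Sum>j\<in>UNIV. tr (M j))"
proof -
  have "tr (bd M) = (\<Sum>a\<in>UNIV. \<Sum>b\<in>UNIV. \<Sum>j\<in>UNIV. M j (a, b) (a, b))"
    unfolding tr_pair sum_pair bd_def by simp
  also have "\<dots> = (\<Sum>a\<in>UNIV. \<Sum>j\<in>UNIV. \<Sum>b\<in>UNIV. M j (a, b) (a, b))"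
    by (rule sum.cong[OF refl], rule sum.swap)
  also have "\<dots> = (\<Sum>j\<in>UNIV. \<Sum>a\<in>UNIV. \<Sum>b\<in>UNIV. M j (a, b) (a, b))"
    by (rule sum.swap)
  also have "\<dots> = (\<Sum>j\<in>UNIV. tr (M j))" unfolding tr_pair ..
  finally show ?thesis .
qed

lemma trace_norm_bd:
  fixes D :: "'j::finite \<Rightarrow> ('a::finite \<times> 'b::finite) qop"
  shows "trace_norm (bd D) = (\<Sum>j\<in>UNIV. trace_norm (D j))"
proof -
  let ?P = "\<lambda>j. mmult (adj (D j)) (D j)"
  have "mmult (adj (bd D)) (bd D) = bd ?P" unfolding adj_bd mmult_bd ..
  also have "\<dots> = mmult (bd (\<lambda>j. msqrt (?P j))) (bd (\<lambda>j. msqrt (?P j)))"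
    unfolding mmult_bd by (simp only: msqrt(2)[OF psd_adj_mult])
  finally have eq: "mmult (adj (bd D)) (bd D) = mmult (bd (\<lambda>j. msqrt (?P j))) (bd (\<lambda>j. msqrt (?P j)))" .
  have S: "psd (bd (\<lambda>j. msqrt (?P j)))" by (rule psd_bd) (rule msqrt(1)[OF psd_adj_mult])
  have "msqrt (mmult (adj (bd D)) (bd D)) = bd (\<lambda>j. msqrt (?P j))"
    unfolding eq by (rule msqrt_eq[OF S])
  thus ?thesis unfolding trace_norm_def by (simp add: tr_bd Re_sum)
qed

lemma psd_smul: "psd A \<Longrightarrow> c \<ge> 0 \<Longrightarrow> psd (smul (of_real c) A)"
proof -
  assume A: "psd A" and c: "c \<ge> 0"
  have "qf (smul (of_real c) A) v = of_real c * qf A v" for v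
    unfolding qf_def smul_def by (simp add: sum_distrib_left mult_ac)
  thus ?thesis using A c unfolding psd_qf by simp
qed

lemma mmult_smul: "mmult (smul a A) (smul b B) = smul (a * b) (mmult A B)"
  unfolding mmult_def smul_def by (auto intro!: ext simp: sum_distrib_left mult_ac)
lemma smul_smul: "smul a (smul b A) = smul (a * b) A"
  unfolding smul_def by (auto intro!: ext simp: mult_ac)

lemma trace_norm_smul:
  assumes c: "c \<ge> 0"
  shows "trace_norm (smul (of_real c) X) = c * trace_norm X"
proof -
  let ?P = "mmult (adj X) X"
  have "mmult (adj (smul (of_real c) X)) (smul (of_real c) X) = smul (of_real c) (smul (of_real c) ?P)"
    unfolding mmult_def adj_def smul_def by (auto intro!: ext simp: sum_distrib_left mult_ac)
  also have "\<dots> = mmult (smul (of_real c) (msqrt ?P)) (smul (of_real c) (msqrt ?P))"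
    unfolding mmult_smul smul_smul msqrt(2)[OF psd_adj_mult] ..
  finally have eq: "mmult (adj (smul (of_real c) X)) (smul (of_real c) X) = mmult (smul (of_real c) (msqrt ?P)) (smul (of_real c) (msqrt ?P))" .
  have "msqrt (mmult (adj (smul (of_real c) X)) (smul (of_real c) X)) = smul (of_real c) (msqrt ?P)"
    unfolding eq by (rule msqrt_eq[OF psd_smul[OF msqrt(1)[OF psd_adj_mult] c]])
  thus ?thesis unfolding trace_norm_def by (simp add: tr_def smul_def sum_distrib_left)
qed

lemma cq_bd:
  fixes M :: "'j::finite \<Rightarrow> ('a::finite \<times> 'b::finite) qop"
  shows "cq_state M = bd (\<lambda>j. smul (of_real (1 / real CARD('j))) (M j))"
  unfolding cq_state_def bd_def smul_def by (auto intro!: ext simp: divide_inverse mult.commute)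

lemma msub_cq: "msub (cq_state M1) (cq_state M2) = cq_state (\<lambda>j. msub (M1 j) (M2 j))"
  unfolding cq_state_def msub_def by (auto intro!: ext simp: diff_divide_distrib)



lemma psd_tr_nonneg: "psd A \<Longrightarrow> Re (tr A) \<ge> 0"
proof -
  assume A: "psd A"
  have "A i i = qf A (ev i)" for i unfolding qf_ip mv_ev ip_ev_left ..
  hence "tr A = (\<Sum>i\<in>UNIV. qf A (ev i))" unfolding tr_def by simp
  thus ?thesis using A unfolding psd_qf by (simp add: Re_sum sum_nonneg)
qed

lemma trace_norm_nonneg: "trace_norm X \<ge> 0"
  unfolding trace_norm_def by (rule psd_tr_nonneg[OF msqrt(1)[OF psd_adj_mult]])

lemma psd_zero: "psd (\<lambda>i j. 0)"
  unfolding psd_qf qf_def by simp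

theorem lemma10:
  fixes \<rho> :: "(('a1::finite \<times> 'a2::finite) \<times> 'e::finite) qop"
    and U :: "'j::finite \<Rightarrow> ('a1 \<times> 'a2) qop"
    and \<epsilon> :: real
  assumes "density_op \<rho>"
    and "\<And>j. unitary_op (U j)"
    and "(1 / real CARD('j)) * (\<Sum>j\<in>UNIV. trace_norm
           (msub (meas (U j) \<rho>)
                 (tensor (smul (1 / of_nat CARD('a1)) (idop :: 'a1 qop)) (ptrace_fst \<rho>)))) \<le> \<epsilon>"
  shows "hmin_smooth (sqrt (2 * \<epsilon>)) (cq_state (\<lambda>j. meas (U j) \<rho>))
           \<ge> ereal (log 2 (real CARD('a1)))"
proof -
  note dens = assms(1) and unit = assms(2) and hyp = assms(3)
  define L where "L = real CARD('j)"
  define K where "K = real CARD('a1)"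
  have Lpos: "L > 0" and Kpos: "K > 0" unfolding L_def K_def by auto
  define \<rho>E where "\<rho>E = ptrace_fst \<rho>"
  define N where "N = tensor (smul (of_real (1 / K)) (idop :: 'a1 qop)) \<rho>E"
  have Neq: "tensor (smul (1 / of_nat CARD('a1)) (idop :: 'a1 qop)) (ptrace_fst \<rho>) = N"
    unfolding N_def \<rho>E_def K_def by simp
  define M where "M j = meas (U j) \<rho>" for j
  define R where "R = cq_state M"
  define R' where "R' = cq_state (\<lambda>j::'j. N)"
  have rpsd: "psd \<rho>" and rtr: "tr \<rho> = 1" using dens unfolding density_op_def by auto
  have Mpsd: "psd (M j)" for j unfolding M_def by (rule psd_meas[OF rpsd])
  have Mtr: "tr (M j) = 1" for j unfolding M_def tr_meas[OF unit] by (rule rtr)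
  have Npsd: "psd N" unfolding N_def \<rho>E_def using Kpos by (intro psd_tensor_id psd_ptrace rpsd) simp
  have Ntr: "tr N = 1" unfolding N_def tr_tensor_id \<rho>E_def tr_ptrace rtr K_def by simp
  have Rdens: "density_op R" unfolding density_op_def R_def
    using psd_cq[OF Mpsd] tr_cq[of M] Mtr by simp
  have R'dens: "density_op R'" unfolding density_op_def R'_def
    using psd_cq[of "\<lambda>j. N", OF Npsd] tr_cq[of "\<lambda>j::'j. N"] Ntr by simp
  have D: "trace_norm (msub R R') = (1 / L) * (\<Sum>j\<in>UNIV. trace_norm (msub (M j) N))"
  proof -
    have "msub R R' = cq_state (\<lambda>j. msub (M j) N)" unfolding R_def R'_def by (rule msub_cq)
    hence "trace_norm (msub R R') = (\<Sum>j\<in>UNIV. trace_norm (smul (of_real (1 / L)) (msub (M j) N)))"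
      unfolding L_def by (simp only: cq_bd trace_norm_bd)
    also have "\<dots> = (\<Sum>j\<in>UNIV. (1 / L) * trace_norm (msub (M j) N))"
      using Lpos by (intro sum.cong refl trace_norm_smul) simp
    finally show ?thesis by (simp add: sum_distrib_left)
  qed
  have De: "trace_norm (msub R R') \<le> \<epsilon>" using hyp unfolding D L_def M_def Neq .
  have e0: "\<epsilon> \<ge> 0" using De trace_norm_nonneg[of "msub R R'"] by linarith
  have F1: "gen_fidelity R R' \<ge> 1 - \<epsilon> / 2" using fidelity_bound[OF Rdens R'dens] De by linarith
  have F0: "gen_fidelity R R' \<ge> 0"
    unfolding gen_fidelity_def using Rdens R'dens trace_norm_nonneg unfolding density_op_def by simp
  have "1 - (gen_fidelity R R')^2 \<le> 2 * \<epsilon>"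
  proof (cases "\<epsilon> \<le> 2")
    case True
    hence "(1 - \<epsilon> / 2)^2 \<le> (gen_fidelity R R')^2" using F1 by (intro power_mono) auto
    moreover have "(1 - \<epsilon> / 2)^2 = 1 - \<epsilon> + \<epsilon>^2 / 4" by (simp add: power2_eq_square field_simps)
    moreover have "\<epsilon>^2 \<ge> 0" by simp
    ultimately show ?thesis using e0 by linarith
  next
    case False
    have "(gen_fidelity R R')^2 \<ge> 0" by simp
    thus ?thesis using False by linarith
  qed
  hence PD: "purified_dist R R' \<le> sqrt (2 * \<epsilon>)" unfolding purified_dist_def by (simp add: real_sqrt_le_mono)
  have sub: "subnormalized R'" using R'dens unfolding subnormalized_def density_op_def by simp
  define \<sigma> where "\<sigma> = ptrace_fst R'"
  have \<sigma>dens: "density_op \<sigma>" unfolding \<sigma>_def density_op_def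
    using psd_ptrace R'dens tr_ptrace unfolding density_op_def by metis
  have pw: "2 powr (- log 2 K) = 1 / K" using Kpos by (simp add: powr_minus divide_inverse)
  have eqR': "smul (complex_of_real (2 powr (- log 2 K))) (tensor idop \<sigma>) = R'"
  proof (intro ext)
    fix x y :: "'a1 \<times> 'e \<times> 'j"
    obtain k e j where x: "x = (k, e, j)" by (cases x) auto
    obtain k' e' j' where y: "y = (k', e', j')" by (cases y) auto
    have "\<sigma> (e, j) (e', j') = (\<Sum>k''\<in>(UNIV::'a1 set). (if j = j' then of_real (1 / K) * \<rho>E e e' / of_nat CARD('j) else 0))"
      unfolding \<sigma>_def ptrace_fst_def R'_def cq_state_def N_def tensor_def smul_def idop_def by simp
    also have "\<dots> = (if j = j' then \<rho>E e e' / of_nat CARD('j) else 0)" using Kpos unfolding K_def by simp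
    finally show "smul (complex_of_real (2 powr (- log 2 K))) (tensor idop \<sigma>) x y = R' x y"
      unfolding x y pw smul_def tensor_def idop_def R'_def cq_state_def N_def by simp
  qed
  have "loewner_le R' (smul (complex_of_real (2 powr (- log 2 K))) (tensor idop \<sigma>))"
    unfolding loewner_le_def eqR' msub_def by (simp add: psd_zero)
  hence "ereal (log 2 K) \<le> hmin_rel R' \<sigma>" unfolding hmin_rel_def by (intro Sup_upper) blast
  also have "\<dots> \<le> hmin R'" unfolding hmin_def using \<sigma>dens by (intro Sup_upper) blast
  also have "\<dots> \<le> hmin_smooth (sqrt (2 * \<epsilon>)) R" unfolding hmin_smooth_def using sub PD by (intro Sup_upper) blast
  finally show ?thesis unfolding R_def M_def K_def .
qed


end
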